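(* Let $\phi(\mu)=\sum_{i=1}^n\operatorname{arccot}\mu_i$ for $\mu\in\mathbb{R}^n$, let $\Gamma=\{\mu\in\mathbb{R}^n:0<\phi(\mu)<\pi\}$ and $f(\mu)=\cot\phi(\mu)$ on $\Gamma$. For $\sigma\in\mathbb{R}$ let $\Gamma^\sigma=\{\mu\in\mathbb{R}^n:0<\phi(\mu)<\operatorname{arccot}\sigma\}$. Then for any $\sigma,\sigma'\in\mathbb{R}$ with $\sigma<\sigma'$ there exists a constant $N>0$, depending only on $\sigma$ and $\sigma'$, such that $$\Gamma^\sigma+N\mathbf 1\subset\Gamma^{\sigma'},$$ where $\mathbf 1=(1,\dots,1)$.
   Context: $\operatorname{arccot}:\mathbb{R}\to(0,\pi)$ denotes the inverse of $\cot$ on $(0,\pi)$. *)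

theory Defs
  imports "HOL-Analysis.Analysis"
begin

definition arccot :: "real \<Rightarrow> real" where
  "arccot x = (THE y. 0 < y \<and> y < pi \<and> cot y = x)"

definition phi :: "real^'n \<Rightarrow> real" where
  "phi \<mu> = (\<Sum>i\<in>UNIV. arccot (\<mu> $ i))"

definition Gamma_sigma :: "real \<Rightarrow> (real^'n) set" where
  "Gamma_sigma \<sigma> = {\<mu>. 0 < phi \<mu> \<and> phi \<mu> < arccot \<sigma>}"

end

theory Submission
  imports Defs
begin

lemma arccot_eq: "arccot x = pi/2 - arctan x"
  unfolding arccot_def
proof (rule the_equality)
  show "0 < pi/2 - arctan x \<and> pi/2 - arctan x < pi \<and> cot (pi/2 - arctan x) = x"
  proof -
    have t: "sin (arctan x) / cos (arctan x) = x"
      using tan_arctan[of x] by (simp add: tan_def)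
    show ?thesis using arctan_bounded[of x] t
      by (auto simp: cot_def sin_diff cos_diff)
  qed
next
  fix y assume y: "0 < y \<and> y < pi \<and> cot y = x"
  have "tan (pi/2 - y) = x" using y by (simp add: tan_def cot_def sin_diff cos_diff)
  moreover have "arctan (tan (pi/2 - y)) = pi/2 - y"
    by (rule arctan_tan) (use y in auto)
  ultimately show "y = pi/2 - arctan x" by simp
qed

lemma arccot_pos: "0 < arccot x"
  using arctan_bounded[of x] by (simp add: arccot_eq)

lemma arccot_less_iff: "arccot x < arccot y \<longleftrightarrow> y < x"
  by (simp add: arccot_eq arctan_less_iff)

theorem proposition2p6:
  fixes \<sigma> \<sigma>' :: real
  assumes "\<sigma> < \<sigma>'"
  shows "\<exists>N>0. \<forall>\<mu> \<in> (Gamma_sigma \<sigma> :: (real^'n) set).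
           \<mu> + (\<chi> i. N) \<in> Gamma_sigma \<sigma>'"
proof -
  define n where "n = real CARD('n)"
  have n0: "n > 0" unfolding n_def by simp
  define \<epsilon> where "\<epsilon> = arccot \<sigma>' / n"
  have e0: "\<epsilon> > 0" unfolding \<epsilon>_def using n0 arccot_pos by simp
  have "eventually (\<lambda>x. arctan x > pi/2 - \<epsilon>) at_top"
    using tendsto_arctan_at_top e0
    by (intro order_tendstoD(1)) (auto simp: filterlim_def)
  then obtain X where X: "\<And>x. x \<ge> X \<Longrightarrow> arctan x > pi/2 - \<epsilon>"
    by (auto simp: eventually_at_top_linorder)
  define N where "N = max 1 (X - \<sigma>)"
  have N0: "N > 0" unfolding N_def by simp
  have bnd: "arccot (\<sigma> + N) < \<epsilon>"
  proof -
    have "\<sigma> + N \<ge> X" unfolding N_def by linarith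
    then show ?thesis using X[of "\<sigma> + N"] unfolding arccot_eq by linarith
  qed
  show ?thesis
  proof (intro exI[of _ N] conjI ballI N0)
    fix \<mu> :: "real^'n" assume "\<mu> \<in> Gamma_sigma \<sigma>"
    then have ph: "0 < phi \<mu>" "phi \<mu> < arccot \<sigma>" by (auto simp: Gamma_sigma_def)
    have gt: "\<mu> $ i > \<sigma>" for i
    proof -
      have "arccot (\<mu> $ i) \<le> phi \<mu>" unfolding phi_def
        by (rule member_le_sum) (auto intro: less_imp_le arccot_pos)
      then have "arccot (\<mu> $ i) < arccot \<sigma>" using ph by linarith
      then show ?thesis by (simp add: arccot_less_iff)
    qed
    have "phi (\<mu> + (\<chi> i. N)) = (\<Sum>i\<in>UNIV. arccot (\<mu> $ i + N))"
      by (simp add: phi_def)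
    also have "\<dots> < (\<Sum>i\<in>(UNIV::'n set). arccot (\<sigma> + N))"
      by (rule sum_strict_mono) (auto simp: arccot_less_iff gt)
    also have "\<dots> = n * arccot (\<sigma> + N)" by (simp add: n_def)
    also have "\<dots> \<le> n * \<epsilon>" using bnd n0 by simp
    also have "\<dots> = arccot \<sigma>'" using n0 by (simp add: \<epsilon>_def)
    finally have a: "phi (\<mu> + (\<chi> i. N)) < arccot \<sigma>'" .
    have b: "0 < phi (\<mu> + (\<chi> i. N))" unfolding phi_def
      by (rule sum_pos) (auto simp: arccot_pos)
    show "\<mu> + (\<chi> i. N) \<in> Gamma_sigma \<sigma>'" using a b by (simp add: Gamma_sigma_def)
  qed
qed

end
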